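(* Let $k>1$ and let $f$ be a positive function, differentiable on $[0,1]$. Consider the planar system $$\frac{dI}{d\tau}=I\,[f(R)(1-I-R)-k],\qquad \frac{dR}{d\tau}=(k-1)I-R,$$ and let $(I^*,R^* )$ be an endemic equilibrium point of it such that $\frac{df}{dR}(R^* )\le 0$. Then $(I^*,R^* )$ is locally stable.
   Context: An endemic equilibrium is an equilibrium point $(I^*,R^* )$ of the system with $I^*>0$. "Locally stable" means locally asymptotically stable (both eigenvalues of the Jacobian at the point have negative real part). *)

theory Defs
  imports "HOL-Analysis.Analysis"
begin

definition field_I :: "(real \<Rightarrow> real) \<Rightarrow> real \<Rightarrow> real \<Rightarrow> real \<Rightarrow> real" where
  "field_I f k I R = I * (f R * (1 - I - R) - k)"

definition field_R :: "real \<Rightarrow> real \<Rightarrow> real \<Rightarrow> real" where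
  "field_R k I R = (k - 1) * I - R"

text \<open>Equilibrium point of the system (lying in the domain R in [0,1] of f).\<close>

definition is_equilibrium :: "(real \<Rightarrow> real) \<Rightarrow> real \<Rightarrow> real \<Rightarrow> real \<Rightarrow> bool" where
  "is_equilibrium f k I R \<longleftrightarrow> R \<in> {0..1} \<and> field_I f k I R = 0 \<and> field_R k I R = 0"

definition is_endemic_equilibrium :: "(real \<Rightarrow> real) \<Rightarrow> real \<Rightarrow> real \<Rightarrow> real \<Rightarrow> bool" where
  "is_endemic_equilibrium f k I R \<longleftrightarrow> is_equilibrium f k I R \<and> I > 0"

definition jac11 :: "(real \<Rightarrow> real) \<Rightarrow> real \<Rightarrow> real \<Rightarrow> real \<Rightarrow> real" where
  "jac11 f k I R = deriv (\<lambda>x. field_I f k x R) I"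
definition jac12 :: "(real \<Rightarrow> real) \<Rightarrow> real \<Rightarrow> real \<Rightarrow> real \<Rightarrow> real" where
  "jac12 f k I R = deriv (\<lambda>y. field_I f k I y) R"
definition jac21 :: "real \<Rightarrow> real \<Rightarrow> real \<Rightarrow> real" where
  "jac21 k I R = deriv (\<lambda>x. field_R k x R) I"
definition jac22 :: "real \<Rightarrow> real \<Rightarrow> real \<Rightarrow> real" where
  "jac22 k I R = deriv (\<lambda>y. field_R k I y) R"

definition jac_eigenvalue :: "(real \<Rightarrow> real) \<Rightarrow> real \<Rightarrow> real \<Rightarrow> real \<Rightarrow> complex \<Rightarrow> bool" where
  "jac_eigenvalue f k I R \<mu> \<longleftrightarrow>
     (of_real (jac11 f k I R) - \<mu>) * (of_real (jac22 k I R) - \<mu>)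
       - of_real (jac12 f k I R) * of_real (jac21 k I R) = 0"

definition locally_stable :: "(real \<Rightarrow> real) \<Rightarrow> real \<Rightarrow> real \<Rightarrow> real \<Rightarrow> bool" where
  "locally_stable f k I R \<longleftrightarrow> (\<forall>\<mu>. jac_eigenvalue f k I R \<mu> \<longrightarrow> Re \<mu> < 0)"

end

theory Submission
  imports Defs
begin

lemma quad_stable:
  fixes t d :: real and \<mu> :: complex
  assumes "t < 0" "d > 0" "\<mu> * \<mu> - of_real t * \<mu> + of_real d = 0"
  shows "Re \<mu> < 0"
proof -
  obtain a b where ab: "\<mu> = Complex a b" by (cases \<mu>)
  from assms(3) have re: "a*a - b*b - t*a + d = 0" and im: "2*a*b - t*b = 0"
    by (auto simp: ab complex_eq_iff)
  show ?thesis
  proof (cases "b = 0")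
    case True
    then have "a*a - t*a + d = 0" using re by simp
    moreover have "a \<ge> 0 \<Longrightarrow> a*a - t*a + d > 0" using assms
      by (smt (verit) mult_nonneg_nonneg mult_nonpos_nonneg)
    ultimately show ?thesis using ab by force
  next
    case False
    then have "2*a - t = 0" using im by (metis mult.commute mult_eq_0_iff right_diff_distrib)
    then show ?thesis using ab assms by simp
  qed
qed

theorem corollary1:
  fixes f :: "real \<Rightarrow> real" and k Is Rs :: real
  assumes "k > 1"
    and "\<forall>x\<in>{0..1}. f x > 0"
    and "f differentiable_on {0..1}"
    and "is_endemic_equilibrium f k Is Rs"
    and "deriv f Rs \<le> 0"
  shows "locally_stable f k Is Rs"
proof -
  have R01: "Rs \<in> {0..1}" and eqI: "Is * (f Rs * (1 - Is - Rs) - k) = 0"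
    and eqR: "(k - 1) * Is - Rs = 0" and Ipos: "Is > 0"
    using assms(4) by (auto simp: is_endemic_equilibrium_def is_equilibrium_def field_I_def field_R_def)
  have fpos: "f Rs > 0" using assms(2) R01 by auto
  have Rpos: "Rs > 0" using eqR Ipos assms(1) by (smt (verit) mult_pos_pos)
  have eq1: "f Rs * (1 - Is - Rs) = k" using eqI Ipos by simp
  have s: "1 - Is - Rs > 0"
  proof (rule ccontr)
    assume "\<not> ?thesis"
    then have "f Rs * (1 - Is - Rs) \<le> 0" using fpos by (simp add: mult_nonneg_nonpos)
    then show False using eq1 assms(1) by simp
  qed
  have Rlt: "Rs < 1" using s Ipos by simp
  have "f differentiable (at Rs within {0..1})" using assms(3) R01 by (simp add: differentiable_on_def)
  moreover have "Rs \<in> interior {0..1::real}" using Rpos Rlt by simp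
  ultimately have "f differentiable (at Rs)" by (metis at_within_interior)
  then have fd: "(f has_real_derivative deriv f Rs) (at Rs)"
    using DERIV_deriv_iff_real_differentiable by blast
  define f' where "f' = deriv f Rs"
  have "((\<lambda>x. x * (f Rs * (1 - x - Rs) - k)) has_real_derivative
      (f Rs * (1 - Is - Rs) - k - f Rs * Is)) (at Is)"
    by (auto intro!: derivative_eq_intros simp: algebra_simps)
  then have j11: "jac11 f k Is Rs = f Rs * (1 - Is - Rs) - k - f Rs * Is"
    unfolding jac11_def field_I_def by (rule DERIV_imp_deriv)
  have "((\<lambda>y. Is * (f y * (1 - Is - y) - k)) has_real_derivative
      (Is * (f' * (1 - Is - Rs) - f Rs))) (at Rs)"
    using fd unfolding f'_def by (auto intro!: derivative_eq_intros simp: algebra_simps)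
  then have j12: "jac12 f k Is Rs = Is * (f' * (1 - Is - Rs) - f Rs)"
    unfolding jac12_def field_I_def by (rule DERIV_imp_deriv)
  have j21: "jac21 k Is Rs = k - 1"
    unfolding jac21_def field_R_def
    by (rule DERIV_imp_deriv) (auto intro!: derivative_eq_intros)
  have j22: "jac22 k Is Rs = -1"
    unfolding jac22_def field_R_def
    by (rule DERIV_imp_deriv) (auto intro!: derivative_eq_intros)
  have f'le: "f' \<le> 0" using assms(5) f'_def by simp
  define t where "t = - f Rs * Is - 1"
  define d where "d = f Rs * Is - Is * (f' * (1 - Is - Rs) - f Rs) * (k - 1)"
  have fI: "f Rs * Is > 0" using fpos Ipos by simp
  have tneg: "t < 0" using fI unfolding t_def by simp
  have "f' * (1 - Is - Rs) \<le> 0" using f'le s by (simp add: mult_nonpos_nonneg)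
  then have "f' * (1 - Is - Rs) - f Rs < 0" using fpos by simp
  moreover have "Is * (k - 1) > 0" using Ipos assms(1) by simp
  ultimately have "Is * (f' * (1 - Is - Rs) - f Rs) * (k - 1) < 0"
    by (metis mult.assoc mult.commute mult_pos_neg)
  moreover have "f Rs * Is > 0" using fpos Ipos by simp
  ultimately have dpos: "d > 0" unfolding d_def by simp
  show ?thesis
    unfolding locally_stable_def
  proof (intro allI impI)
    fix \<mu> assume h: "jac_eigenvalue f k Is Rs \<mu>"
    have "\<mu> * \<mu> - of_real t * \<mu> + of_real d = 0"
    proof -
      have "(of_real (jac11 f k Is Rs) - \<mu>) * (of_real (jac22 k Is Rs) - \<mu>)
         - of_real (jac12 f k Is Rs) * of_real (jac21 k Is Rs) = 0"
        using h unfolding jac_eigenvalue_def .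
      moreover have "(of_real (jac11 f k Is Rs) - \<mu>) * (of_real (jac22 k Is Rs) - \<mu>)
         - of_real (jac12 f k Is Rs) * of_real (jac21 k Is Rs)
         = \<mu> * \<mu> - of_real t * \<mu> + of_real d"
        unfolding j11 j12 j21 j22 eq1 t_def d_def of_real_diff of_real_mult of_real_minus of_real_1
        by (simp add: algebra_simps)
      ultimately show ?thesis by simp
    qed
    then show "Re \<mu> < 0" using quad_stable tneg dpos by blast
  qed
qed

end
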